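(* Let $r,s,t,a,b,c$ be real numbers with $t\neq0$ and $\Delta(r,s,t)>0$, let $\alpha$ be the real root and $\omega_1,\omega_2$ the non-real roots of $x^3-rx^2-sx-t=0$, and let $M_{H,n}^{(3)}$, $M_{h,n}^{(3)}$ be the matrix sequences defined in the context. Let $n,m,l$ be nonnegative integers with $l\ge m$, put $\mu(m)=\alpha^{m}+\omega_{1}^{m}+\omega_{2}^{m}$ and $\sigma_{m}=t^{m}(1-\alpha^{-m})+(1-\alpha^{m})(\omega_{1}^{m}+\omega_{2}^{m}-1)$, and assume $\sigma_m\neq0$. Then $$\sum_{k=0}^{n}M_{H,mk+l}^{(3)}=\frac{1}{\sigma_{m}}\Big( M_{H,m(n+1)+l}^{(3)}-M_{H,l}^{(3)}+t^{m}M_{H,mn+l}^{(3)}-t^{m}M_{H,l-m}^{(3)}-\mu(m)M_{H,m(n+1)+l}^{(3)}+\mu(m)M_{H,l}^{(3)}+M_{H,m(n+2)+l}^{(3)}-M_{H,l+m}^{(3)}\Big),$$ and the same identity holds with every $M_{H,k}^{(3)}$ replaced by $M_{h,k}^{(3)}$.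
   Context: $\Delta(r,s,t)=\frac{r^{3}t}{27}-\frac{r^{2}s^{2}}{108}+\frac{rst}{6}-\frac{s^{3}}{27}+\frac{t^{2}}{4}$; when $\Delta>0$ the cubic has one real root and two non-real conjugate roots. The third-order Horadam matrix sequence is the sequence of $3\times3$ matrices defined by $M_{H,n+3}^{(3)}=rM_{H,n+2}^{(3)}+sM_{H,n+1}^{(3)}+tM_{H,n}^{(3)}$ ($n\ge0$) with $M_{H,0}^{(3)}=\begin{pmatrix} b & c-rb & ta\\ a & b-ra & c-rb-sa\\ \frac{1}{t}(c-rb-sa) & a-\frac{r}{t}(c-rb-sa) & \frac1t\big(-sc+(t+rs)b+(s^2-rt)a\big)\end{pmatrix}$, $M_{H,1}^{(3)}=\begin{pmatrix} c & sb+ta & tb\\ b & c-rb & ta\\ a & b-ra & c-rb-sa\end{pmatrix}$, $M_{H,2}^{(3)}=\begin{pmatrix} rc+sb+ta & sc+tb & tc\\ c & sb+ta & tb\\ b & c-rb & ta\end{pmatrix}$. The generalized Tribonacci matrix sequence satisfies the same recurrence with $M_{h,0}^{(3)}=I_3$, $M_{h,1}^{(3)}=\begin{pmatrix} r&s&t\\1&0&0\\0&1&0\end{pmatrix}$, $M_{h,2}^{(3)}=\begin{pmatrix} r^2+s&rs+t&rt\\ r&s&t\\ 1&0&0\end{pmatrix}$. *)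

theory Defs
  imports "HOL-Analysis.Analysis"
begin

(* Discriminant-type quantity Delta(r,s,t) of x^3 - r x^2 - s x - t *)
definition Delta :: "real \<Rightarrow> real \<Rightarrow> real \<Rightarrow> real" where
  "Delta r s t = r^3 * t / 27 - r^2 * s^2 / 108 + r * s * t / 6 - s^3 / 27 + t^2 / 4"

definition mat3 :: "'a::zero \<Rightarrow> 'a \<Rightarrow> 'a \<Rightarrow> 'a \<Rightarrow> 'a \<Rightarrow> 'a \<Rightarrow> 'a \<Rightarrow> 'a \<Rightarrow> 'a \<Rightarrow> 'a^3^3" where
  "mat3 a11 a12 a13 a21 a22 a23 a31 a32 a33 =
     vector [vector [a11, a12, a13], vector [a21, a22, a23], vector [a31, a32, a33]]"

fun mseq3 :: "real \<Rightarrow> real \<Rightarrow> real \<Rightarrow> real^3^3 \<Rightarrow> real^3^3 \<Rightarrow> real^3^3 \<Rightarrow> nat \<Rightarrow> real^3^3" where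
  "mseq3 r s t A0 A1 A2 0 = A0"
| "mseq3 r s t A0 A1 A2 (Suc 0) = A1"
| "mseq3 r s t A0 A1 A2 (Suc (Suc 0)) = A2"
| "mseq3 r s t A0 A1 A2 (Suc (Suc (Suc n))) =
     r *\<^sub>R mseq3 r s t A0 A1 A2 (Suc (Suc n)) + s *\<^sub>R mseq3 r s t A0 A1 A2 (Suc n)
     + t *\<^sub>R mseq3 r s t A0 A1 A2 n"

definition MH :: "real \<Rightarrow> real \<Rightarrow> real \<Rightarrow> real \<Rightarrow> real \<Rightarrow> real \<Rightarrow> nat \<Rightarrow> real^3^3" where
  "MH r s t a b c = mseq3 r s t
     (mat3 b (c - r*b) (t*a)
           a (b - r*a) (c - r*b - s*a)
           ((c - r*b - s*a) / t) (a - (r/t) * (c - r*b - s*a))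
             ((- (s*c) + (t + r* s) * b + (s^2 - r*t) * a) / t))
     (mat3 c (s*b + t*a) (t*b)
           b (c - r*b) (t*a)
           a (b - r*a) (c - r*b - s*a))
     (mat3 (r*c + s*b + t*a) (s*c + t*b) (t*c)
           c (s*b + t*a) (t*b)
           b (c - r*b) (t*a))"

definition Mh :: "real \<Rightarrow> real \<Rightarrow> real \<Rightarrow> nat \<Rightarrow> real^3^3" where
  "Mh r s t = mseq3 r s t
     (mat3 1 0 0  0 1 0  0 0 1)
     (mat3 r s t  1 0 0  0 1 0)
     (mat3 (r^2 + s) (r* s + t) (r*t)  r s t  1 0 0)"

end

theory Submission
  imports Defs "HOL-Computational_Algebra.Polynomial"
begin

lemma pow_diff_dvd: "(x::'a::comm_ring_1) - y dvd x^m - y^m"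
proof (induction m)
  case 0 then show ?case by simp
next
  case (Suc m)
  have "x^Suc m - y^Suc m = x*(x^m - y^m) + y^m*(x - y)" by (simp add: algebra_simps)
  then show ?case using Suc by (simp add: dvd_add dvd_mult)
qed

definition app :: "complex poly \<Rightarrow> (nat \<Rightarrow> complex) \<Rightarrow> nat \<Rightarrow> complex" where
  "app Q f n = (\<Sum>i\<le>degree Q. coeff Q i * f (n+i))"

lemma app_bound: "degree Q \<le> N \<Longrightarrow> app Q f n = (\<Sum>i\<le>N. coeff Q i * f (n+i))"
  unfolding app_def
  by (rule sum.mono_neutral_left) (auto simp: coeff_eq_0)

lemma app_add: "app (Q + R) f n = app Q f n + app R f n"
proof -
  let ?N = "max (degree Q) (degree R)"
  have "app (Q+R) f n = (\<Sum>i\<le>?N. coeff (Q+R) i * f (n+i))"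
    by (rule app_bound) (simp add: degree_add_le)
  also have "\<dots> = (\<Sum>i\<le>?N. coeff Q i * f (n+i)) + (\<Sum>i\<le>?N. coeff R i * f (n+i))"
    by (simp add: distrib_right sum.distrib)
  also have "\<dots> = app Q f n + app R f n"
    by (simp add: app_bound[symmetric])
  finally show ?thesis .
qed

lemma app_smult: "app (smult c Q) f n = c * app Q f n"
proof -
  have "app (smult c Q) f n = (\<Sum>i\<le>degree Q. coeff (smult c Q) i * f (n+i))"
    by (rule app_bound) simp
  then show ?thesis by (simp add: app_def sum_distrib_left mult.assoc)
qed

lemma app_minus: "app (- Q) f n = - app Q f n"
  using app_smult[of "-1" Q f n] by simp

lemma app_diff: "app (Q - R) f n = app Q f n - app R f n"
  using app_add[of Q "-R" f n] app_minus[of R f n] by simp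

lemma app_zero: "app 0 f n = 0"
  by (simp add: app_def)

lemma app_pCons: "app (pCons a Q) f n = a * f n + app Q f (Suc n)"
proof -
  have "app (pCons a Q) f n = (\<Sum>i\<le>Suc (degree Q). coeff (pCons a Q) i * f (n+i))"
    by (rule app_bound) (simp add: degree_pCons_le)
  also have "\<dots> = a * f n + (\<Sum>i\<le>degree Q. coeff Q i * f (Suc n + i))"
    by (subst sum.atMost_Suc_shift) simp
  finally show ?thesis by (simp add: app_def)
qed

lemma app_mult: "app (Q * R) f n = app Q (app R f) n"
proof (induction Q arbitrary: n)
  case 0 then show ?case by (simp add: app_zero)
next
  case (pCons a Q)
  show ?case
    by (simp add: app_add app_smult app_pCons pCons)
qed

lemma app_zero_fun: "app Q (\<lambda>_. 0) n = 0"
  by (simp add: app_def)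

lemma app_monom: "app (monom c k) f n = c * f (n+k)"
proof -
  have "app (monom c k) f n = (\<Sum>i\<le>k. coeff (monom c k) i * f (n+i))"
    by (rule app_bound) (simp add: degree_monom_le)
  also have "\<dots> = (\<Sum>i\<in>{k}. coeff (monom c k) i * f (n+i))"
    by (rule sum.mono_neutral_right) (auto simp: coeff_monom)
  finally show ?thesis by (simp add: coeff_monom)
qed

lemma sub_rec:
  fixes f :: "nat \<Rightarrow> complex" and r s t a w1 w2 :: complex
  assumes rec: "\<And>n. f (n+3) = r * f (n+2) + s * f (n+1) + t * f n"
    and P: "[:-t,-s,-r,1:] = [:-a,1:] * [:-w1,1:] * [:-w2,1:]"
  shows "f (n+3*m) - (a^m + w1^m + w2^m) * f (n+2*m)
         + (a^m*w1^m + w1^m*w2^m + w2^m*a^m) * f (n+m) - (a^m*w1^m*w2^m) * f n = 0"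
proof -
  define X :: "complex poly" where "X = [:0,1:]"
  define Y where "Y = X^m"
  define Q where "Q = (Y - [:a^m:]) * (Y - [:w1^m:]) * (Y - [:w2^m:])"
  have appP: "app [:-t,-s,-r,1:] f = (\<lambda>_. 0)"
  proof
    fix k
    show "app [:-t,-s,-r,1:] f k = 0"
      using rec[of k] by (simp add: app_pCons app_zero algebra_simps eval_nat_numeral)
  qed
  have lin: "\<And>c. [:-c,1:] = X - [:c:]" by (simp add: X_def)
  have dv: "\<And>c. [:-c,1:] dvd Y - [:c^m:]"
    unfolding lin Y_def poly_const_pow[symmetric] by (rule pow_diff_dvd)
  have "[:-t,-s,-r,1:] dvd Q" unfolding P Q_def
    by (intro mult_dvd_mono dv)
  then obtain R where QR: "Q = R * [:-t,-s,-r,1:]" by (auto simp: mult.commute elim!: dvdE)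
  have Q0: "app Q f n = 0" unfolding QR app_mult appP by (rule app_zero_fun)
  have Yk: "\<And>k. X^k = monom 1 k" by (simp add: X_def monom_altdef)
  have Qexp: "Q = monom 1 (3*m) - smult (a^m + w1^m + w2^m) (monom 1 (2*m))
         + smult (a^m*w1^m + w1^m*w2^m + w2^m*a^m) (monom 1 m) - monom (a^m*w1^m*w2^m) 0"
  proof -
    have "Q = Y*Y*Y - smult (a^m + w1^m + w2^m) (Y*Y)
         + smult (a^m*w1^m + w1^m*w2^m + w2^m*a^m) Y - [:a^m*w1^m*w2^m:]"
      unfolding Q_def by (simp add: algebra_simps smult_add_left smult_add_right smult_diff_right smult_diff_left flip: smult_one)
    moreover have "Y*Y*Y = monom 1 (3*m)" "Y*Y = monom 1 (2*m)" "Y = monom 1 m"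
      unfolding Y_def Yk[symmetric] by (simp_all add: power_add[symmetric] mult_2 add.assoc eval_nat_numeral)
    ultimately show ?thesis by (simp add: monom_0)
  qed
  show ?thesis using Q0 unfolding Qexp
    by (simp add: app_add app_diff app_smult app_monom)
qed

lemma sum_rec:
  fixes h :: "nat \<Rightarrow> complex"
  assumes rec: "\<And>j. h (j+3) = p * h (j+2) - q * h (j+1) + T * h j"
  shows "(\<Sum>k=0..n. h (k+1)) * (p - q + T - 1) =
     h (n+2) - h 1 + T * h (n+1) - T * h 0 - p * h (n+2) + p * h 1 + h (n+3) - h 2"
proof (induction n)
  case 0
  then show ?case using rec[of 0] by (simp add: algebra_simps eval_nat_numeral)
next
  case (Suc n)
  have e: "h (Suc n + 3) = p * h (n+3) - q * h (n+2) + T * h (n+1)"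
    using rec[of "Suc n"] by (simp add: eval_nat_numeral)
  have "(\<Sum>k=0..Suc n. h (k+1)) * (p - q + T - 1) = (\<Sum>k=0..n. h (k+1)) * (p - q + T - 1)
      + h (n+2) * (p - q + T - 1)" by (simp add: algebra_simps)
  also have "\<dots> = h (Suc n+2) - h 1 + T * h (Suc n+1) - T * h 0 - p * h (Suc n+2) + p * h 1 + h (Suc n+3) - h 2"
    unfolding Suc e by (simp add: algebra_simps eval_nat_numeral)
  finally show ?case .
qed

lemma main_entry:
  fixes r s t :: real and \<alpha> :: real and \<omega>1 \<omega>2 :: complex and n m l :: nat
    and X :: "nat \<Rightarrow> real^3^3" and i j
  assumes ht: "t \<noteq> 0"
    and hroots: "\<And>x::complex. x^3 - of_real r * x^2 - of_real s * x - of_real t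
                   = (x - of_real \<alpha>) * (x - \<omega>1) * (x - \<omega>2)"
    and hlm: "l \<ge> m"
    and hsig: "complex_of_real t ^ m * (1 - 1 / complex_of_real \<alpha> ^ m)
               + (1 - complex_of_real \<alpha> ^ m) * (\<omega>1 ^ m + \<omega>2 ^ m - 1) \<noteq> 0"
    and hX: "\<And>n. X (n+3) = r *\<^sub>R X (n+2) + s *\<^sub>R X (n+1) + t *\<^sub>R X n"
  shows "complex_of_real ((\<Sum>k=0..n. X (m*k + l)) $ i $ j)
               = (1 / (complex_of_real t ^ m * (1 - 1 / complex_of_real \<alpha> ^ m)
                 + (1 - complex_of_real \<alpha> ^ m) * (\<omega>1 ^ m + \<omega>2 ^ m - 1))) * ( of_real (X (m*(n+1) + l) $ i $ j)
                               - of_real (X l $ i $ j)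
                               + of_real t ^ m * of_real (X (m*n + l) $ i $ j)
                               - of_real t ^ m * of_real (X (l - m) $ i $ j)
                               - (complex_of_real \<alpha> ^ m + \<omega>1 ^ m + \<omega>2 ^ m) * of_real (X (m*(n+1) + l) $ i $ j)
                               + (complex_of_real \<alpha> ^ m + \<omega>1 ^ m + \<omega>2 ^ m) * of_real (X l $ i $ j)
                               + of_real (X (m*(n+2) + l) $ i $ j)
                               - of_real (X (l + m) $ i $ j))"
proof -
  define a where "a = complex_of_real \<alpha>"
  define f where "f k = complex_of_real (X k $ i $ j)" for k
  have frec: "f (k+3) = of_real r * f (k+2) + of_real s * f (k+1) + of_real t * f k" for k
    unfolding f_def hX by simp
  have "poly [:-of_real t,-of_real s,-of_real r,1:] x = poly ([:-a,1:] * [:-\<omega>1,1:] * [:-\<omega>2,1:]) x" for x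
    using hroots[of x] by (simp add: a_def algebra_simps power2_eq_square power3_eq_cube)
  then have P: "[:-of_real t,-of_real s,-of_real r,1:] = [:-a,1:] * [:-\<omega>1,1:] * [:-\<omega>2,1:]"
    using poly_eq_poly_eq_iff by blast
  have tt: "complex_of_real t = a * \<omega>1 * \<omega>2"
    using hroots[of 0] by (simp add: a_def)
  have a0: "a \<noteq> 0" using tt ht by auto
  define p where "p = a^m + \<omega>1^m + \<omega>2^m"
  define q where "q = a^m*\<omega>1^m + \<omega>1^m*\<omega>2^m + \<omega>2^m*a^m"
  define T where "T = complex_of_real t ^ m"
  have T': "T = a^m*\<omega>1^m*\<omega>2^m" unfolding T_def tt by (simp add: power_mult_distrib)
  define h where "h k = f (l - m + m*k)" for k
  have hrec: "h (k+3) = p * h (k+2) - q * h (k+1) + T * h k" for k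
  proof -
    have E: "f (l - m + m*k + 3*m) - p * f (l - m + m*k + 2*m) + q * f (l - m + m*k + m) - T * f (l - m + m*k) = 0"
      unfolding p_def q_def T' by (rule sub_rec[OF frec P])
    have I: "l - m + m*k + 3*m = l - m + m*(k+3)" "l - m + m*k + 2*m = l - m + m*(k+2)"
      "l - m + m*k + m = l - m + m*(k+1)" by (simp_all add: algebra_simps)
    have "h (k+3) - p * h (k+2) + q * h (k+1) - T * h k = 0"
      using E unfolding I h_def .
    then show ?thesis by (simp add: algebra_simps)
  qed
  have S: "(\<Sum>k=0..n. h (k+1)) * (p - q + T - 1) =
     h (n+2) - h 1 + T * h (n+1) - T * h 0 - p * h (n+2) + p * h 1 + h (n+3) - h 2"
    by (rule sum_rec[OF hrec])
  have sig: "complex_of_real t ^ m * (1 - 1 / complex_of_real \<alpha> ^ m)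
               + (1 - complex_of_real \<alpha> ^ m) * (\<omega>1 ^ m + \<omega>2 ^ m - 1) = p - q + T - 1"
    unfolding a_def[symmetric] T_def[symmetric] p_def q_def using a0
    by (simp add: T' field_simps)
  have idx: "\<And>k. l - m + m*(k+1) = m*k + l" "l - m + m*(n+2) = m*(n+1) + l"
    "l - m + m*1 = l" "l - m + m*(n+1) = m*n + l" "l - m + m*0 = l - m"
    "l - m + m*(n+3) = m*(n+2) + l" "l - m + m*2 = l + m"
    using hlm by (simp_all add: algebra_simps)
  have lhs: "complex_of_real ((\<Sum>k=0..n. X (m*k + l)) $ i $ j) = (\<Sum>k=0..n. h (k+1))"
    unfolding h_def f_def idx by simp
  have S': "(\<Sum>k=0..n. h (k+1)) * (p - q + T - 1) =
     f (m*(n+1) + l) - f l + T * f (m*n + l) - T * f (l-m) - p * f (m*(n+1) + l) + p * f l + f (m*(n+2) + l) - f (l+m)"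
    using S unfolding h_def idx .
  have ne: "p - q + T - 1 \<noteq> 0" using hsig sig by simp
  show ?thesis unfolding lhs sig
    using S' ne unfolding T_def p_def a_def f_def
    by (simp add: field_simps)
qed

theorem theorem2p5:
  fixes r s t a b c :: real and \<alpha> :: real and \<omega>1 \<omega>2 :: complex and n m l :: nat
  assumes ht: "t \<noteq> 0"
    and hDelta: "Delta r s t > 0"
    and hroots: "\<And>x::complex. x^3 - of_real r * x^2 - of_real s * x - of_real t
                   = (x - of_real \<alpha>) * (x - \<omega>1) * (x - \<omega>2)"
    and hw1: "Im \<omega>1 \<noteq> 0" and hw2: "Im \<omega>2 \<noteq> 0"
    and hlm: "l \<ge> m"
    and hsig: "complex_of_real t ^ m * (1 - 1 / complex_of_real \<alpha> ^ m)
               + (1 - complex_of_real \<alpha> ^ m) * (\<omega>1 ^ m + \<omega>2 ^ m - 1) \<noteq> 0"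
  shows "let \<mu> = complex_of_real \<alpha> ^ m + \<omega>1 ^ m + \<omega>2 ^ m;
             \<sigma> = complex_of_real t ^ m * (1 - 1 / complex_of_real \<alpha> ^ m)
                 + (1 - complex_of_real \<alpha> ^ m) * (\<omega>1 ^ m + \<omega>2 ^ m - 1)
         in (\<forall>i j. complex_of_real ((\<Sum>k=0..n. MH r s t a b c (m*k + l)) $ i $ j)
               = (1 / \<sigma>) * ( of_real (MH r s t a b c (m*(n+1) + l) $ i $ j)
                               - of_real (MH r s t a b c l $ i $ j)
                               + of_real t ^ m * of_real (MH r s t a b c (m*n + l) $ i $ j)
                               - of_real t ^ m * of_real (MH r s t a b c (l - m) $ i $ j)
                               - \<mu> * of_real (MH r s t a b c (m*(n+1) + l) $ i $ j)
                               + \<mu> * of_real (MH r s t a b c l $ i $ j)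
                               + of_real (MH r s t a b c (m*(n+2) + l) $ i $ j)
                               - of_real (MH r s t a b c (l + m) $ i $ j)))
          \<and> (\<forall>i j. complex_of_real ((\<Sum>k=0..n. Mh r s t (m*k + l)) $ i $ j)
               = (1 / \<sigma>) * ( of_real (Mh r s t (m*(n+1) + l) $ i $ j)
                               - of_real (Mh r s t l $ i $ j)
                               + of_real t ^ m * of_real (Mh r s t (m*n + l) $ i $ j)
                               - of_real t ^ m * of_real (Mh r s t (l - m) $ i $ j)
                               - \<mu> * of_real (Mh r s t (m*(n+1) + l) $ i $ j)
                               + \<mu> * of_real (Mh r s t l $ i $ j)
                               + of_real (Mh r s t (m*(n+2) + l) $ i $ j)
                               - of_real (Mh r s t (l + m) $ i $ j)))"
proof -
  have rH: "\<And>n. MH r s t a b c (n+3) = r *\<^sub>R MH r s t a b c (n+2) + s *\<^sub>R MH r s t a b c (n+1) + t *\<^sub>R MH r s t a b c n"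
    by (simp add: MH_def eval_nat_numeral)
  have rh: "\<And>n. Mh r s t (n+3) = r *\<^sub>R Mh r s t (n+2) + s *\<^sub>R Mh r s t (n+1) + t *\<^sub>R Mh r s t n"
    by (simp add: Mh_def eval_nat_numeral)
  show ?thesis
    unfolding Let_def
    using main_entry[OF ht hroots hlm hsig rH] main_entry[OF ht hroots hlm hsig rh]
    by blast
qed

end
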